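(* Let $Q$ be a quasi-array of size $m$, let $\sigma$ be a composition of $m$, let $k\in\{1,\dots,m\}$, and let $T=\pi_\sigma(Q)$. Suppose the $k$-th diagonal of $Q$ meets $T$ in a cell containing the entry $\ell$. Then: (1) $C_k$ is defined on $Q$ if and only if $e_{\ell-1}$ is defined on $T$ and changes the symbol $\ell$ lying in the cell of $T$ on the $k$-th diagonal; in this case $e_{\ell-1}(T)=\pi_\sigma(C_k(Q))$. (2) $D_k$ is defined on $Q$ if and only if $f_{\ell}$ is defined on $T$ and changes the symbol $\ell$ lying in the cell of $T$ on the $k$-th diagonal; in this case $f_{\ell}(T)=\pi_\sigma(D_k(Q))$.
   Context: Entries are positive integers; rows are indexed top to bottom, columns left to right. A quasi-array of size $m$ is an array $Q$ with cells $(i,j)$, $1\le i\le m$, $1\le j\le m-i+1$, each containing a positive integer $Q_{(i,j)}$, such that $Q_{(1,j)}\le Q_{(1,j+1)}$ and $Q_{(i,j)}=Q_{(1,i+j-1)}+i-1$ for all cells. The $k$-th diagonal is the set of cells $(i,j)$ with $i+j-1=k$. Operators: $D_m$ is always defined on $Q$ of size $m$ and adds $1$ to every entry of the $m$-th diagonal; for $1\le k\le m-1$, $D_k$ is defined iff $Q_{(1,k)}<Q_{(1,k+1)}$, and then adds $1$ to all entries of the $k$-th diagonal; for $2\le k\le m$, $C_k$ is defined iff $Q_{(1,k)}>Q_{(1,k-1)}$, and then subtracts $1$ from all entries of the $k$-th diagonal; $C_1$ is defined iff $Q_{(1,1)}>1$, and then subtracts $1$ from $Q_{(1,1)}$. A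 quasi-ribbon diagram of shape $\sigma=(\sigma_1,\dots,\sigma_r)$ (a composition) has $\sigma_i$ cells in row $i$, with the leftmost cell of row $i+1$ directly below the rightmost cell of row $i$. A quasi-ribbon tableau is a filling of such a diagram with positive integers, weakly increasing along rows and strictly increasing down columns. For $\sigma$ a composition of $m$, $\pi_\sigma(Q)$ is the quasi-ribbon tableau obtained by taking the cells of $Q$ forming a quasi-ribbon diagram of shape $\sigma$ whose first cell is $(1,1)$ (so its cells lie one on each of the diagonals $1,\dots,m$), with the entries of $Q$. The column reading of a quasi-ribbon tableau is the word obtained by reading columns left to right, each column bottom to top; operators on tableaux act via their column readings, each letter of the word corresponding to a cell. Quasi-Kashiwara operators on a word $u$ over the positive integers, for $i\ge1$: if $u$ contains a (not necessarily consecutive) subsequence $(i+1)\,i$, both $e_i(u)$ and $f_i(u)$ are undefined; otherwise $e_i(u)$ is obtained by replacing the leftmost $i+1$ by $i$ (undefined if $u$ has no $i+1$), and $f_i(u)$ is obtained by replacing the rightmost $i$ by $i+1$ (undefined if $u$ has no $i$). $e_0$ is undefined. *)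

theory Defs
  imports Main
begin

definition is_cell :: "nat \<Rightarrow> nat \<Rightarrow> nat \<Rightarrow> bool" where
  "is_cell m i j \<longleftrightarrow> 1 \<le> i \<and> 1 \<le> j \<and> i + j \<le> m + 1"

definition quasi_array :: "nat \<Rightarrow> (nat \<Rightarrow> nat \<Rightarrow> nat) \<Rightarrow> bool" where
  "quasi_array m Q \<longleftrightarrow>
     (\<forall>i j. is_cell m i j \<longrightarrow> 0 < Q i j) \<and>
     (\<forall>j. 1 \<le> j \<and> j < m \<longrightarrow> Q 1 j \<le> Q 1 (j + 1)) \<and>
     (\<forall>i j. is_cell m i j \<longrightarrow> Q i j = Q 1 (i + j - 1) + i - 1) \<and>
     (\<forall>i j. \<not> is_cell m i j \<longrightarrow> Q i j = 0)"

definition diag_add :: "nat \<Rightarrow> nat \<Rightarrow> (nat \<Rightarrow> nat \<Rightarrow> nat) \<Rightarrow> nat \<Rightarrow> nat \<Rightarrow> nat" where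
  "diag_add m k Q = (\<lambda>i j. if is_cell m i j \<and> i + j - 1 = k then Q i j + 1 else Q i j)"

definition diag_sub :: "nat \<Rightarrow> nat \<Rightarrow> (nat \<Rightarrow> nat \<Rightarrow> nat) \<Rightarrow> nat \<Rightarrow> nat \<Rightarrow> nat" where
  "diag_sub m k Q = (\<lambda>i j. if is_cell m i j \<and> i + j - 1 = k then Q i j - 1 else Q i j)"

definition opD :: "nat \<Rightarrow> nat \<Rightarrow> (nat \<Rightarrow> nat \<Rightarrow> nat) \<Rightarrow> (nat \<Rightarrow> nat \<Rightarrow> nat) option" where
  "opD m k Q =
     (if k = m \<or> (1 \<le> k \<and> k < m \<and> Q 1 k < Q 1 (k + 1))
      then Some (diag_add m k Q) else None)"

definition opC :: "nat \<Rightarrow> nat \<Rightarrow> (nat \<Rightarrow> nat \<Rightarrow> nat) \<Rightarrow> (nat \<Rightarrow> nat \<Rightarrow> nat) option" where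
  "opC m k Q =
     (if (k = 1 \<and> 1 < Q 1 1) \<or> (2 \<le> k \<and> k \<le> m \<and> Q 1 (k - 1) < Q 1 k)
      then Some (diag_sub m k Q) else None)"

definition composition :: "nat list \<Rightarrow> nat \<Rightarrow> bool" where
  "composition \<sigma> m \<longleftrightarrow> (\<forall>s \<in> set \<sigma>. 0 < s) \<and> sum_list \<sigma> = m"

text \<open>The leftmost cell of
  row i+1 lies directly below the rightmost cell of row i.\<close>

fun ribbon_aux :: "nat \<Rightarrow> nat \<Rightarrow> nat list \<Rightarrow> (nat \<times> nat) list" where
  "ribbon_aux r c [] = []"
| "ribbon_aux r c (s # ss) = map (\<lambda>j. (r, j)) [c..<c + s] @ ribbon_aux (r + 1) (c + s - 1) ss"

definition ribbon_cells :: "nat list \<Rightarrow> (nat \<times> nat) list" where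
  "ribbon_cells \<sigma> = ribbon_aux 1 1 \<sigma>"

text \<open>Cells in column-reading order: columns left to right, each bottom to top.\<close>

definition col_cells :: "nat list \<Rightarrow> (nat \<times> nat) list" where
  "col_cells \<sigma> =
     concat (map (\<lambda>c. rev (filter (\<lambda>p. snd p = c) (ribbon_cells \<sigma>)))
                 [1..<length (ribbon_cells \<sigma>) + 1])"

definition pi_sigma :: "nat list \<Rightarrow> (nat \<Rightarrow> nat \<Rightarrow> nat) \<Rightarrow> nat \<times> nat \<Rightarrow> nat" where
  "pi_sigma \<sigma> Q = (\<lambda>p. if p \<in> set (ribbon_cells \<sigma>) then Q (fst p) (snd p) else 0)"

definition col_reading :: "nat list \<Rightarrow> (nat \<times> nat \<Rightarrow> nat) \<Rightarrow> nat list" where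
  "col_reading \<sigma> T = map T (col_cells \<sigma>)"

definition tab_of_reading :: "nat list \<Rightarrow> nat list \<Rightarrow> nat \<times> nat \<Rightarrow> nat" where
  "tab_of_reading \<sigma> w =
     (\<lambda>p. if p \<in> set (col_cells \<sigma>)
          then w ! (THE n. n < length (col_cells \<sigma>) \<and> col_cells \<sigma> ! n = p) else 0)"

definition has_inversion :: "nat \<Rightarrow> nat list \<Rightarrow> bool" where
  "has_inversion i u \<longleftrightarrow>
     (\<exists>p q. p < q \<and> q < length u \<and> u ! p = i + 1 \<and> u ! q = i)"

definition e_pos :: "nat \<Rightarrow> nat list \<Rightarrow> nat option" where
  "e_pos i u =
     (if i = 0 \<or> has_inversion i u \<or> i + 1 \<notin> set u then None
      else Some (LEAST p. p < length u \<and> u ! p = i + 1))"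

definition f_pos :: "nat \<Rightarrow> nat list \<Rightarrow> nat option" where
  "f_pos i u =
     (if i = 0 \<or> has_inversion i u \<or> i \<notin> set u then None
      else Some (GREATEST p. p < length u \<and> u ! p = i))"

definition e_word :: "nat \<Rightarrow> nat list \<Rightarrow> nat list option" where
  "e_word i u = map_option (\<lambda>p. u[p := i]) (e_pos i u)"

definition f_word :: "nat \<Rightarrow> nat list \<Rightarrow> nat list option" where
  "f_word i u = map_option (\<lambda>p. u[p := i + 1]) (f_pos i u)"

definition e_tab :: "nat list \<Rightarrow> nat \<Rightarrow> (nat \<times> nat \<Rightarrow> nat) \<Rightarrow> (nat \<times> nat \<Rightarrow> nat) option" where
  "e_tab \<sigma> i T = map_option (tab_of_reading \<sigma>) (e_word i (col_reading \<sigma> T))"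

definition f_tab :: "nat list \<Rightarrow> nat \<Rightarrow> (nat \<times> nat \<Rightarrow> nat) \<Rightarrow> (nat \<times> nat \<Rightarrow> nat) option" where
  "f_tab \<sigma> i T = map_option (tab_of_reading \<sigma>) (f_word i (col_reading \<sigma> T))"

end

theory Submission
  imports Defs
begin


lemma ribbon_aux_len: "(\<forall>s\<in>set \<sigma>. 0 < s) \<Longrightarrow> length (ribbon_aux r c \<sigma>) = sum_list \<sigma>"
  by (induction \<sigma> arbitrary: r c) auto

lemma ribbon_aux_set: "x \<in> set (ribbon_aux r c \<sigma>) \<Longrightarrow> (\<forall>s\<in>set \<sigma>. 0 < s) \<Longrightarrow> r \<le> fst x \<and> c \<le> snd x"
proof (induction \<sigma> arbitrary: r c)
  case Nil then show ?case by simp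
next
  case (Cons s ss)
  then show ?case by (force)
qed

lemma ribbon_aux_nth: "(\<forall>s\<in>set \<sigma>. 0 < s) \<Longrightarrow> n < length (ribbon_aux r c \<sigma>) \<Longrightarrow>
   fst (ribbon_aux r c \<sigma> ! n) + snd (ribbon_aux r c \<sigma> ! n) = r + c + n"
proof (induction \<sigma> arbitrary: r c n)
  case Nil then show ?case by simp
next
  case (Cons s ss)
  show ?case
  proof (cases "n < s")
    case True
    then show ?thesis by (simp add: nth_append)
  next
    case False
    have "s > 0" using Cons.prems by simp
    have "n - s < length (ribbon_aux (r + 1) (c + s - 1) ss)" using Cons.prems False by simp
    from Cons.IH[OF _ this] Cons.prems have
      "fst (ribbon_aux (r + 1) (c + s - 1) ss ! (n - s)) + snd (ribbon_aux (r + 1) (c + s - 1) ss ! (n - s)) = r + 1 + (c + s - 1) + (n - s)" by simp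
    then show ?thesis using False \<open>s > 0\<close> by (simp add: nth_append)
  qed
qed

lemma ribbon_aux_sorted: "(\<forall>s\<in>set \<sigma>. 0 < s) \<Longrightarrow>
   sorted_wrt (\<lambda>a b. fst a \<le> fst b \<and> snd a \<le> snd b) (ribbon_aux r c \<sigma>)"
proof (induction \<sigma> arbitrary: r c)
  case Nil then show ?case by simp
next
  case (Cons s ss)
  have A: "sorted_wrt (\<lambda>a b. fst a \<le> fst b \<and> snd a \<le> snd b) (map (\<lambda>j. (r, j)) [c..<c + s])"
    by (simp add: sorted_wrt_map)
  have "s > 0" using Cons.prems by simp
  have B: "\<forall>x\<in>set (map (\<lambda>j. (r, j)) [c..<c + s]). \<forall>y\<in>set (ribbon_aux (r + 1) (c + s - 1) ss).
      fst x \<le> fst y \<and> snd x \<le> snd y"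
    using ribbon_aux_set[of _ "r+1" "c+s-1" ss] Cons.prems by fastforce
  show ?case using A B Cons by (simp add: sorted_wrt_append)
qed

definition Rc :: "nat \<times> nat \<Rightarrow> nat \<times> nat \<Rightarrow> bool" where
  "Rc a b \<longleftrightarrow> snd a < snd b \<or> (snd a = snd b \<and> fst b < fst a)"

lemma sorted_concat:
  assumes "sorted_wrt (<) xs" "\<And>x. x \<in> set xs \<Longrightarrow> sorted_wrt R (g x)"
    "\<And>x y a b. x \<in> set xs \<Longrightarrow> y \<in> set xs \<Longrightarrow> x < y \<Longrightarrow> a \<in> set (g x) \<Longrightarrow> b \<in> set (g y) \<Longrightarrow> R a b"
  shows "sorted_wrt R (concat (map g (xs :: nat list)))"
  using assms
proof (induction xs)
  case Nil then show ?case by simp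
next
  case (Cons x xs)
  have IH: "sorted_wrt R (concat (map g xs))"
  proof (rule Cons.IH)
    show "sorted_wrt (<) xs" using Cons.prems(1) by simp
    show "sorted_wrt R (g y)" if "y \<in> set xs" for y using Cons.prems(2) that by simp
    show "R a b" if "y \<in> set xs" "z \<in> set xs" "y < z" "a \<in> set (g y)" "b \<in> set (g z)" for y z a b
      using Cons.prems(3)[of y z a b] that by simp
  qed
  have "R a b" if "a \<in> set (g x)" "b \<in> set (concat (map g xs))" for a b
  proof -
    from that(2) obtain y where y: "y \<in> set xs" "b \<in> set (g y)" by auto
    have "x < y" using Cons.prems(1) y(1) by simp
    show ?thesis by (rule Cons.prems(3)[of x y]) (use y that \<open>x < y\<close> in auto)
  qed
  then show ?case using IH Cons.prems(2) by (simp add: sorted_wrt_append)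
qed



lemma L_len: "composition \<sigma> m \<Longrightarrow> length (ribbon_cells \<sigma>) = m"
  by (simp add: composition_def ribbon_cells_def ribbon_aux_len)

lemma L_nth: "composition \<sigma> m \<Longrightarrow> n < m \<Longrightarrow>
   fst (ribbon_cells \<sigma> ! n) + snd (ribbon_cells \<sigma> ! n) = n + 2"
  using ribbon_aux_nth[of \<sigma> n 1 1] L_len[of \<sigma> m]
  by (simp add: composition_def ribbon_cells_def)

lemma L_sorted: "composition \<sigma> m \<Longrightarrow>
   sorted_wrt (\<lambda>a b. fst a \<le> fst b \<and> snd a \<le> snd b) (ribbon_cells \<sigma>)"
  using ribbon_aux_sorted[of \<sigma> 1 1] by (simp add: composition_def ribbon_cells_def)

lemma L_set: "composition \<sigma> m \<Longrightarrow> x \<in> set (ribbon_cells \<sigma>) \<Longrightarrow> 1 \<le> fst x \<and> 1 \<le> snd x \<and> fst x + snd x \<le> m + 1"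
proof -
  assume a: "composition \<sigma> m" "x \<in> set (ribbon_cells \<sigma>)"
  then obtain n where n: "n < m" "x = ribbon_cells \<sigma> ! n" by (metis L_len in_set_conv_nth)
  have "1 \<le> fst x \<and> 1 \<le> snd x" using ribbon_aux_set[of x 1 1 \<sigma>] a by (simp add: composition_def ribbon_cells_def)
  then show ?thesis using L_nth[OF a(1) n(1)] n by simp
qed

lemma L_mono: "composition \<sigma> m \<Longrightarrow> x \<in> set (ribbon_cells \<sigma>) \<Longrightarrow> y \<in> set (ribbon_cells \<sigma>) \<Longrightarrow>
   fst x + snd x \<le> fst y + snd y \<Longrightarrow> fst x \<le> fst y \<and> snd x \<le> snd y"
proof -
  assume a: "composition \<sigma> m" "x \<in> set (ribbon_cells \<sigma>)" "y \<in> set (ribbon_cells \<sigma>)"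
    "fst x + snd x \<le> fst y + snd y"
  obtain n where n: "n < m" "x = ribbon_cells \<sigma> ! n" using a by (metis L_len in_set_conv_nth)
  obtain n' where n': "n' < m" "y = ribbon_cells \<sigma> ! n'" using a by (metis L_len in_set_conv_nth)
  have "n \<le> n'" using L_nth[OF a(1) n(1)] L_nth[OF a(1) n'(1)] n n' a(4) by simp
  show ?thesis
  proof (cases "n = n'")
    case True then show ?thesis using n n' by simp
  next
    case False
    then have "n < n'" using \<open>n \<le> n'\<close> by simp
    then show ?thesis using L_sorted[OF a(1)] n n' L_len[OF a(1)]
      by (simp add: sorted_wrt_iff_nth_less)
  qed
qed

lemma L_inj: "composition \<sigma> m \<Longrightarrow> x \<in> set (ribbon_cells \<sigma>) \<Longrightarrow> y \<in> set (ribbon_cells \<sigma>) \<Longrightarrow>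
   fst x + snd x = fst y + snd y \<Longrightarrow> x = y"
  using L_mono[of \<sigma> m x y] L_mono[of \<sigma> m y x] by (simp add: prod_eq_iff)

lemma L_ex: "composition \<sigma> m \<Longrightarrow> 2 \<le> d \<Longrightarrow> d \<le> m + 1 \<Longrightarrow> \<exists>y\<in>set (ribbon_cells \<sigma>). fst y + snd y = d"
proof -
  assume a: "composition \<sigma> m" "2 \<le> d" "d \<le> m + 1"
  then have "d - 2 < m" by simp
  then show ?thesis using L_nth[OF a(1) \<open>d - 2 < m\<close>] L_len[OF a(1)] a
    by (intro bexI[of _ "ribbon_cells \<sigma> ! (d - 2)"]) auto
qed

lemma L_distinct: "composition \<sigma> m \<Longrightarrow> distinct (ribbon_cells \<sigma>)"
proof -
  assume a: "composition \<sigma> m"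
  show ?thesis unfolding distinct_conv_nth
  proof (intro allI impI)
    fix i j assume ij: "i < length (ribbon_cells \<sigma>)" "j < length (ribbon_cells \<sigma>)" "i \<noteq> j"
    then show "ribbon_cells \<sigma> ! i \<noteq> ribbon_cells \<sigma> ! j"
      using L_nth[OF a, of i] L_nth[OF a, of j] L_len[OF a] by auto
  qed
qed

lemma L_sorted': "composition \<sigma> m \<Longrightarrow>
   sorted_wrt (\<lambda>a b. fst a \<le> fst b \<and> snd a \<le> snd b \<and> a \<noteq> b) (ribbon_cells \<sigma>)"
  using L_sorted[of \<sigma> m] L_distinct[of \<sigma> m]
  by (simp add: sorted_wrt_iff_nth_less distinct_conv_nth)

lemma cc_set: "composition \<sigma> m \<Longrightarrow> set (col_cells \<sigma>) = set (ribbon_cells \<sigma>)"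
  using L_set[of \<sigma> m] L_len[of \<sigma> m]
proof -
  assume a: "composition \<sigma> m"
  have "x \<in> set (ribbon_cells \<sigma>) \<Longrightarrow> snd x \<in> set [1..<length (ribbon_cells \<sigma>) + 1]" for x
    using L_set[OF a, of x] L_len[OF a] by auto
  then show ?thesis by (auto simp: col_cells_def)
qed

lemma cc_sorted: "composition \<sigma> m \<Longrightarrow> sorted_wrt Rc (col_cells \<sigma>)"
  unfolding col_cells_def
proof (rule sorted_concat)
  assume a: "composition \<sigma> m"
  show "sorted_wrt (<) [1..<length (ribbon_cells \<sigma>) + 1]" by (rule sorted_wrt_upt)
  show "sorted_wrt Rc (rev (filter (\<lambda>p. snd p = x) (ribbon_cells \<sigma>)))" for x
    unfolding sorted_wrt_rev
  proof (rule sorted_wrt_mono_rel[OF _ sorted_wrt_filter[OF L_sorted'[OF a]]])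
    fix u v assume uv: "u \<in> set (filter (\<lambda>p. snd p = x) (ribbon_cells \<sigma>))"
      "v \<in> set (filter (\<lambda>p. snd p = x) (ribbon_cells \<sigma>))" "fst u \<le> fst v \<and> snd u \<le> snd v \<and> u \<noteq> v"
    show "Rc v u" using uv by (auto simp: Rc_def prod_eq_iff)
  qed
  show "Rc a b" if "x < y" "a \<in> set (rev (filter (\<lambda>p. snd p = x) (ribbon_cells \<sigma>)))"
     "b \<in> set (rev (filter (\<lambda>p. snd p = y) (ribbon_cells \<sigma>)))" for x y a b
    using that by (simp add: Rc_def)
qed



lemma cc_distinct: "composition \<sigma> m \<Longrightarrow> distinct (col_cells \<sigma>)"
proof -
  assume a: "composition \<sigma> m"
  have s: "sorted_wrt Rc (col_cells \<sigma>)" by (rule cc_sorted[OF a])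
  show ?thesis unfolding distinct_conv_nth
  proof (intro allI impI)
    fix i j assume ij: "i < length (col_cells \<sigma>)" "j < length (col_cells \<sigma>)" "i \<noteq> j"
    show "col_cells \<sigma> ! i \<noteq> col_cells \<sigma> ! j"
    proof (cases "i < j")
      case True
      then have "Rc (col_cells \<sigma> ! i) (col_cells \<sigma> ! j)" using s ij by (simp add: sorted_wrt_iff_nth_less)
      then show ?thesis by (auto simp: Rc_def)
    next
      case False then have "j < i" using ij by simp
      then have "Rc (col_cells \<sigma> ! j) (col_cells \<sigma> ! i)" using s ij by (simp add: sorted_wrt_iff_nth_less)
      then show ?thesis by (auto simp: Rc_def)
    qed
  qed
qed

lemma cc_len: "composition \<sigma> m \<Longrightarrow> length (col_cells \<sigma>) = m"
  using distinct_card[OF cc_distinct[of \<sigma> m]] distinct_card[OF L_distinct[of \<sigma> m]] cc_set[of \<sigma> m] L_len[of \<sigma> m]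
  by simp

lemma cc_order: "composition \<sigma> m \<Longrightarrow> p < m \<Longrightarrow> p' < m \<Longrightarrow> Rc (col_cells \<sigma> ! p) (col_cells \<sigma> ! p') \<Longrightarrow> p < p'"
proof (rule ccontr)
  assume a: "composition \<sigma> m" "p < m" "p' < m" "Rc (col_cells \<sigma> ! p) (col_cells \<sigma> ! p')" "\<not> p < p'"
  show False
  proof (cases "p = p'")
    case True then show False using a(4) by (simp add: Rc_def)
  next
    case False
    then have "p' < p" using a by simp
    then have "Rc (col_cells \<sigma> ! p') (col_cells \<sigma> ! p)" using cc_sorted[OF a(1)] cc_len[OF a(1)] a
      by (simp add: sorted_wrt_iff_nth_less)
    then show False using a(4) by (auto simp: Rc_def)
  qed
qed

lemma tab_nth: "composition \<sigma> m \<Longrightarrow> p < m \<Longrightarrow> tab_of_reading \<sigma> w (col_cells \<sigma> ! p) = w ! p"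
proof -
  assume a: "composition \<sigma> m" "p < m"
  have "(THE n. n < length (col_cells \<sigma>) \<and> col_cells \<sigma> ! n = col_cells \<sigma> ! p) = p"
    using cc_distinct[OF a(1)] cc_len[OF a(1)] a(2)
    by (intro the_equality) (auto simp: nth_eq_iff_index_eq)
  then show ?thesis using a cc_len[OF a(1)] by (simp add: tab_of_reading_def)
qed

lemma tab_out: "composition \<sigma> m \<Longrightarrow> z \<notin> set (ribbon_cells \<sigma>) \<Longrightarrow> tab_of_reading \<sigma> w z = 0"
  using cc_set[of \<sigma> m] by (simp add: tab_of_reading_def)

lemma qa_val: "quasi_array m Q \<Longrightarrow> is_cell m i j \<Longrightarrow> Q i j + 1 = Q 1 (i + j - 1) + i"
proof -
  assume a: "quasi_array m Q" "is_cell m i j"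
  then have "Q i j = Q 1 (i + j - 1) + i - 1" unfolding quasi_array_def by blast
  moreover have "1 \<le> i" using a(2) unfolding is_cell_def by simp
  ultimately show ?thesis by simp
qed

lemma qa_pos: "quasi_array m Q \<Longrightarrow> is_cell m i j \<Longrightarrow> 0 < Q i j"
  unfolding quasi_array_def by blast

lemma qa_mono: "quasi_array m Q \<Longrightarrow> 1 \<le> a \<Longrightarrow> a \<le> b \<Longrightarrow> b \<le> m \<Longrightarrow> Q 1 a \<le> Q 1 b"
proof (induction b)
  case 0 then show ?case by simp
next
  case (Suc b)
  show ?case
  proof (cases "a = Suc b")
    case True then show ?thesis by simp
  next
    case False
    then have "a \<le> b" using Suc by simp
    then have "Q 1 a \<le> Q 1 b" using Suc by simp
    moreover have "Q 1 b \<le> Q 1 (b + 1)" using Suc.prems \<open>a \<le> b\<close> unfolding quasi_array_def by simp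
    ultimately show ?thesis by simp
  qed
qed



theorem proposition3p8:
  fixes m k l r c :: nat and Q :: "nat \<Rightarrow> nat \<Rightarrow> nat" and \<sigma> :: "nat list"
    and T :: "nat \<times> nat \<Rightarrow> nat"
  assumes "quasi_array m Q"
    and "composition \<sigma> m"
    and "1 \<le> k" and "k \<le> m"
    and "T = pi_sigma \<sigma> Q"
    and "(r, c) \<in> set (ribbon_cells \<sigma>)" and "r + c - 1 = k"
    and "T (r, c) = l"
  shows "(opC m k Q \<noteq> None \<longleftrightarrow>
           (\<exists>p. e_pos (l - 1) (col_reading \<sigma> T) = Some p \<and> col_cells \<sigma> ! p = (r, c)))
       \<and> (\<forall>Q'. opC m k Q = Some Q' \<longrightarrow> e_tab \<sigma> (l - 1) T = Some (pi_sigma \<sigma> Q'))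
       \<and> (opD m k Q \<noteq> None \<longleftrightarrow>
           (\<exists>p. f_pos l (col_reading \<sigma> T) = Some p \<and> col_cells \<sigma> ! p = (r, c)))
       \<and> (\<forall>Q'. opD m k Q = Some Q' \<longrightarrow> f_tab \<sigma> l T = Some (pi_sigma \<sigma> Q'))"
proof -
  note qa = assms(1) and cs = assms(2)
  define L where "L = ribbon_cells \<sigma>"
  define cc where "cc = col_cells \<sigma>"
  define w where "w = col_reading \<sigma> T"
  define q where "q = (\<lambda>j. Q 1 j)"
  define x where "x = (r, c)"
  define s where "s = (\<lambda>z::nat\<times>nat. fst z + snd z)"
  have xL: "x \<in> set L" using assms(6) by (simp add: x_def L_def)
  have lenL: "length L = m" using L_len[OF cs] by (simp add: L_def)
  have lencc: "length cc = m" using cc_len[OF cs] by (simp add: cc_def)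
  have lenw: "length w = m" using lencc by (simp add: w_def col_reading_def cc_def)
  have setcc: "set cc = set L" using cc_set[OF cs] by (simp add: cc_def L_def)
  have dcc: "distinct cc" using cc_distinct[OF cs] by (simp add: cc_def)
  have Lcell: "\<And>z. z \<in> set L \<Longrightarrow> 1 \<le> fst z \<and> 1 \<le> snd z \<and> s z \<le> m + 1"
    using L_set[OF cs] by (simp add: L_def s_def)
  have iscell: "\<And>z. z \<in> set L \<Longrightarrow> is_cell m (fst z) (snd z)"
    using Lcell by (simp add: is_cell_def s_def)
  have Lmono: "\<And>u v. u \<in> set L \<Longrightarrow> v \<in> set L \<Longrightarrow> s u \<le> s v \<Longrightarrow> fst u \<le> fst v \<and> snd u \<le> snd v"
    using L_mono[OF cs] by (simp add: L_def s_def)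
  have Linj: "\<And>u v. u \<in> set L \<Longrightarrow> v \<in> set L \<Longrightarrow> s u = s v \<Longrightarrow> u = v"
    using L_inj[OF cs] by (simp add: L_def s_def)
  have Lex: "\<And>d. 2 \<le> d \<Longrightarrow> d \<le> m + 1 \<Longrightarrow> \<exists>y\<in>set L. s y = d"
    using L_ex[OF cs] by (simp add: L_def s_def)
  have Tv: "\<And>z. z \<in> set L \<Longrightarrow> T z = Q (fst z) (snd z)"
    using assms(5) by (simp add: pi_sigma_def L_def)
  have VS: "\<And>z. z \<in> set L \<Longrightarrow> T z + 1 = q (s z - 1) + fst z"
    using Tv iscell qa_val[OF qa] by (simp add: q_def s_def)
  have Tpos: "\<And>z. z \<in> set L \<Longrightarrow> 1 \<le> T z"
    using Tv iscell qa_pos[OF qa] by (simp add: Suc_le_eq)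
  have qmono: "\<And>a b. 1 \<le> a \<Longrightarrow> a \<le> b \<Longrightarrow> b \<le> m \<Longrightarrow> q a \<le> q b"
    using qa_mono[OF qa] by (simp add: q_def)
  have VM: "\<And>u v. u \<in> set L \<Longrightarrow> v \<in> set L \<Longrightarrow> s u \<le> s v \<Longrightarrow> T u + (fst v - fst u) \<le> T v \<and> fst u \<le> fst v \<and> snd u \<le> snd v"
  proof -
    fix u v assume uv: "u \<in> set L" "v \<in> set L" "s u \<le> s v"
    have m1: "fst u \<le> fst v \<and> snd u \<le> snd v" using Lmono[OF uv] .
    have "q (s u - 1) \<le> q (s v - 1)" using Lcell[OF uv(1)] Lcell[OF uv(2)] uv(3)
      by (intro qmono) (auto simp: s_def)
    then show "T u + (fst v - fst u) \<le> T v \<and> fst u \<le> fst v \<and> snd u \<le> snd v"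
      using VS[OF uv(1)] VS[OF uv(2)] m1 by simp
  qed
  have wp: "\<And>p. p < m \<Longrightarrow> w ! p = T (cc ! p) \<and> cc ! p \<in> set L"
    using lencc setcc by (simp add: w_def col_reading_def cc_def) (metis nth_mem lencc setcc cc_def)
  have ord: "\<And>p p'. p < m \<Longrightarrow> p' < m \<Longrightarrow> Rc (cc ! p) (cc ! p') \<Longrightarrow> p < p'"
    using cc_order[OF cs] by (simp add: cc_def)
  have ord2: "\<And>p p'. p < p' \<Longrightarrow> p' < m \<Longrightarrow> Rc (cc ! p) (cc ! p')"
    using cc_sorted[OF cs] lencc by (simp add: sorted_wrt_iff_nth_less cc_def)
  obtain p0 where p0: "p0 < m" "cc ! p0 = x" using xL setcc lencc by (metis in_set_conv_nth)
  have wp0: "w ! p0 = l" using wp[OF p0(1)] p0 assms(8) by (simp add: x_def)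
  have sx: "s x = k + 1" "fst x = r" "snd x = c" using assms(7) Lcell[OF xL] by (auto simp: s_def x_def)
  have lx: "T x = l" using assms(8) by (simp add: x_def)
  have INV: "\<And>p p'. p < p' \<Longrightarrow> p' < m \<Longrightarrow> T (cc ! p) = T (cc ! p') + 1 \<Longrightarrow>
      snd (cc ! p) = snd (cc ! p') \<and> fst (cc ! p) = fst (cc ! p') + 1 \<and> s (cc ! p') + 1 = s (cc ! p)"
  proof -
    fix p p' assume a: "p < p'" "p' < m" "T (cc ! p) = T (cc ! p') + 1"
    define u where "u = cc ! p"
    define v where "v = cc ! p'"
    have uL: "u \<in> set L" and vL: "v \<in> set L" using wp a by (auto simp: u_def v_def)
    have R: "Rc u v" using ord2[OF a(1,2)] by (simp add: u_def v_def)
    have "\<not> s u \<le> s v" using VM[OF uL vL] a(3) by (auto simp: u_def v_def)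
    then have "s v \<le> s u" by simp
    note h = VM[OF vL uL this]
    then have "snd u = snd v" "fst v < fst u" using R by (auto simp: Rc_def)
    then show "snd (cc ! p) = snd (cc ! p') \<and> fst (cc ! p) = fst (cc ! p') + 1 \<and> s (cc ! p') + 1 = s (cc ! p)"
      using h a(3) by (auto simp: u_def v_def s_def)
  qed
  
  define condC where "condC = ((k = 1 \<and> 1 < q 1) \<or> (2 \<le> k \<and> k \<le> m \<and> q (k - 1) < q k))"
  have C1: "opC m k Q \<noteq> None \<longleftrightarrow> condC"
    by (simp add: opC_def condC_def q_def)
  have C2: "(\<exists>p. e_pos (l - 1) w = Some p \<and> cc ! p = x) \<longleftrightarrow>
      (2 \<le> l \<and> \<not> has_inversion (l - 1) w \<and> (\<forall>p<p0. w ! p \<noteq> l))"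
  proof
    assume "\<exists>p. e_pos (l - 1) w = Some p \<and> cc ! p = x"
    then obtain p where p: "e_pos (l - 1) w = Some p" "cc ! p = x" by blast
    have l2: "2 \<le> l" and ni: "\<not> has_inversion (l - 1) w" and pl: "p = (LEAST p. p < length w \<and> w ! p = l)"
      using p(1) by (auto simp: e_pos_def split: if_splits)
    have P0: "p0 < length w \<and> w ! p0 = l" using p0 wp0 lenw by simp
    have "p < length w \<and> w ! p = l" unfolding pl by (rule LeastI[of "\<lambda>p. p < length w \<and> w ! p = l", OF P0])
    then have "p = p0" using p(2) p0 dcc lencc lenw nth_eq_iff_index_eq[OF dcc, of p p0] by simp
    then have "\<forall>p'<p0. w ! p' \<noteq> l" using not_less_Least[of _ "\<lambda>p. p < length w \<and> w ! p = l"] pl p0 lenw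
      by (metis less_trans)
    then show "2 \<le> l \<and> \<not> has_inversion (l - 1) w \<and> (\<forall>p<p0. w ! p \<noteq> l)" using l2 ni by simp
  next
    assume a: "2 \<le> l \<and> \<not> has_inversion (l - 1) w \<and> (\<forall>p<p0. w ! p \<noteq> l)"
    have lin: "l \<in> set w" using p0 wp0 lenw by (metis nth_mem)
    have "(LEAST p. p < length w \<and> w ! p = l) = p0"
      using a p0 wp0 lenw by (intro Least_equality) (auto simp: not_less[symmetric])
    then have "e_pos (l - 1) w = Some p0" using a lin by (simp add: e_pos_def)
    then show "\<exists>p. e_pos (l - 1) w = Some p \<and> cc ! p = x" using p0 by blast
  qed
  have C3: "condC \<Longrightarrow> 2 \<le> l \<and> \<not> has_inversion (l - 1) w \<and> (\<forall>p<p0. w ! p \<noteq> l)"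
  proof -
    assume cC: condC
    have VSx: "l + 1 = q k + r" using VS[OF xL] sx lx by simp
    have H: "T u + 1 + (r - fst u) \<le> l" if uL: "u \<in> set L" and su: "s u < k + 1" for u
    proof -
      have "2 \<le> s u" using Lcell[OF uL] by (simp add: s_def)
      then have k2: "2 \<le> k" using su by simp
      then have qk: "q (k - 1) < q k" using cC by (simp add: condC_def)
      obtain y where yL: "y \<in> set L" and sy: "s y = k" using Lex[of k] k2 assms(4) by auto
      have VSy: "T y + 1 = q (k - 1) + fst y" using VS[OF yL] sy by simp
      have "fst y \<le> r" using VM[OF yL xL] sy sx by simp
      moreover have "s u \<le> s y" using su sy by simp
      moreover note VM[OF uL yL this]
      ultimately show ?thesis using VSy VSx qk by linarith
    qed
    have l2: "2 \<le> l"
    proof (cases "k = 1")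
      case True
      then have "1 < q 1" using cC by (simp add: condC_def)
      then show ?thesis using VSx True sx Lcell[OF xL] by simp
    next
      case False
      then obtain y where yL: "y \<in> set L" and sy: "s y = k" using Lex[of k] assms(3,4) by auto
      show ?thesis using H[OF yL] sy Tpos[OF yL] by simp
    qed
    have ni: "\<not> has_inversion (l - 1) w"
    proof
      assume "has_inversion (l - 1) w"
      then obtain p p' where pp: "p < p'" "p' < m" "w ! p = l" "w ! p' = l - 1"
        using l2 lenw by (auto simp: has_inversion_def)
      define u where "u = cc ! p"
      define v where "v = cc ! p'"
      have uL: "u \<in> set L" and vL: "v \<in> set L" using wp pp by (auto simp: u_def v_def)
      have Tu: "T u = l" and Tv': "T v = l - 1" using wp pp by (auto simp: u_def v_def)
      have I: "snd u = snd v" "fst u = fst v + 1" "s v + 1 = s u"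
        using INV[OF pp(1,2)] Tu Tv' l2 by (auto simp: u_def v_def)
      show False
      proof (cases "s u = k + 1")
        case True
        then have "s v < k + 1" using I by simp
        from H[OF vL this] have "T v + 1 + (r - fst v) \<le> l" .
        moreover have "u = x" using Linj[OF uL xL] True sx by simp
        ultimately show False using I Tv' l2 sx by simp
      next
        case False
        show False
        proof (cases "s u < k + 1")
          case True
          then show False using H[OF uL True] Tu by simp
        next
          case False
          then have "s x \<le> s v" using `s u \<noteq> k + 1` I sx by simp
          then show False using VM[OF xL vL] lx Tv' l2 by linarith
        qed
      qed
    qed
    have ne: "\<forall>p<p0. w ! p \<noteq> l"
    proof (intro allI impI notI)
      fix p assume pa: "p < p0" "w ! p = l"
      define u where "u = cc ! p"
      have pm: "p < m" using pa p0 by simp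
      have uL: "u \<in> set L" and Tu: "T u = l" using wp[OF pm] pa by (auto simp: u_def)
      show False
      proof (cases "s u < k + 1")
        case True then show False using H[OF uL True] Tu by simp
      next
        case False
        then have sxu: "s x \<le> s u" using sx by simp
        show False
        proof (cases "s u = s x")
          case True
          then have "u = x" using Linj[OF uL xL] by simp
          then have "p = p0" using nth_eq_iff_index_eq[OF dcc, of p p0] pm p0 lencc by (simp add: u_def)
          then show False using pa by simp
        next
          case False
          have h: "T x + (fst u - fst x) \<le> T u" "fst x \<le> fst u" "snd x \<le> snd u" using VM[OF xL uL sxu] by blast+
          then have "fst u = fst x" using lx Tu by simp
          then have "snd x < snd u" using False sxu by (simp add: s_def)
          then have "Rc (cc ! p0) (cc ! p)" using p0 by (simp add: Rc_def u_def)
          then have "p0 < p" using ord[OF p0(1) pm] by simp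
          then show False using pa by simp
        qed
      qed
    qed
    show ?thesis using l2 ni ne by simp
  qed
  have C4: "2 \<le> l \<and> \<not> has_inversion (l - 1) w \<and> (\<forall>p<p0. w ! p \<noteq> l) \<Longrightarrow> condC"
  proof -
    assume a: "2 \<le> l \<and> \<not> has_inversion (l - 1) w \<and> (\<forall>p<p0. w ! p \<noteq> l)"
    have VSx: "l + 1 = q k + r" using VS[OF xL] sx lx by simp
    show condC
    proof (cases "k = 1")
      case True
      then have "r = 1" using sx Lcell[OF xL] by (simp add: s_def)
      then show ?thesis using True VSx a by (simp add: condC_def)
    next
      case False
      then have k2: "2 \<le> k" using assms(3) by simp
      obtain y where yL: "y \<in> set L" and sy: "s y = k" using Lex[of k] k2 assms(4) by auto
      have VSy: "T y + 1 = q (k - 1) + fst y" using VS[OF yL] sy by simp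
      have syx: "s y \<le> s x" using sy sx by simp
      have yx: "fst y \<le> fst x" "snd y \<le> snd x" using VM[OF yL xL syx] by blast+
      obtain py where py: "py < m" "cc ! py = y" using yL setcc lencc by (metis in_set_conv_nth)
      have wpy: "w ! py = T y" using wp[OF py(1)] py by simp
      show ?thesis
      proof (rule ccontr)
        assume "\<not> condC"
        then have "\<not> q (k - 1) < q k" using k2 assms(4) by (simp add: condC_def)
        moreover have "q (k - 1) \<le> q k" using k2 assms(4) by (intro qmono) auto
        ultimately have qe: "q (k - 1) = q k" by simp
        show False
        proof (cases "fst y = fst x")
          case True
          then have "snd y < snd x" using sy sx by (simp add: s_def)
          then have "Rc (cc ! py) (cc ! p0)" using py p0 by (simp add: Rc_def)
          then have "py < p0" using ord[OF py(1) p0(1)] by simp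
          moreover have "T y = l" using VSy VSx qe True sx by simp
          ultimately show False using a wpy by simp
        next
          case False
          then have "fst y < fst x" using yx by simp
          then have ys: "snd y = snd x" "fst y + 1 = fst x" using sy sx yx by (simp_all add: s_def)
          then have "Rc (cc ! p0) (cc ! py)" using py p0 by (simp add: Rc_def)
          then have "p0 < py" using ord[OF p0(1) py(1)] by simp
          moreover have "T y = l - 1" using VSy VSx qe ys sx by simp
          ultimately have "has_inversion (l - 1) w" using a wpy wp0 py lenw
            unfolding has_inversion_def by (intro exI[of _ p0] exI[of _ py]) simp
          then show False using a by simp
        qed
      qed
    qed
  qed
  have TAB: "tab_of_reading \<sigma> (w[p0 := v0]) = pi_sigma \<sigma> Q''"
    if h1: "\<And>z. z \<in> set L \<Longrightarrow> z \<noteq> x \<Longrightarrow> Q'' (fst z) (snd z) = Q (fst z) (snd z)"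
      and h2: "Q'' r c = v0" for v0 Q''
  proof
    fix z
    show "tab_of_reading \<sigma> (w[p0 := v0]) z = pi_sigma \<sigma> Q'' z"
    proof (cases "z \<in> set L")
      case True
      then obtain p where p: "p < m" "cc ! p = z" using setcc lencc by (metis in_set_conv_nth)
      have t: "tab_of_reading \<sigma> (w[p0 := v0]) z = w[p0 := v0] ! p"
        using tab_nth[OF cs p(1)] p by (simp add: cc_def)
      show ?thesis
      proof (cases "p = p0")
        case True
        then have "z = x" using p p0 by simp
        then show ?thesis using t True p0 lenw h2 xL by (simp add: pi_sigma_def x_def L_def)
      next
        case False
        then have "z \<noteq> x" using p p0 nth_eq_iff_index_eq[OF dcc, of p p0] lencc by simp
        then show ?thesis using t False wp[OF p(1)] p h1[of z] True Tv[OF True]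
          by (simp add: pi_sigma_def L_def)
      qed
    next
      case False
      then show ?thesis using tab_out[OF cs, of z] by (simp add: pi_sigma_def L_def)
    qed
  qed
  have Qx: "Q r c = l" using Tv[OF xL] lx by (simp add: x_def)
  have offdiag: "\<And>z. z \<in> set L \<Longrightarrow> z \<noteq> x \<Longrightarrow> \<not> (fst z + snd z - 1 = k)"
  proof
    fix z assume z: "z \<in> set L" "z \<noteq> x" "fst z + snd z - 1 = k"
    then have "s z = s x" using Lcell[OF z(1)] sx unfolding s_def by linarith
    then show False using Linj[OF z(1) xL] z(2) by simp
  qed
  have xcell: "is_cell m r c" using iscell[OF xL] by (simp add: x_def)
  have EP: "2 \<le> l \<and> \<not> has_inversion (l - 1) w \<and> (\<forall>p<p0. w ! p \<noteq> l) \<Longrightarrow> e_pos (l - 1) w = Some p0"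
  proof -
    assume a: "2 \<le> l \<and> \<not> has_inversion (l - 1) w \<and> (\<forall>p<p0. w ! p \<noteq> l)"
    have lin: "l \<in> set w" using p0 wp0 lenw by (metis nth_mem)
    have "(LEAST p. p < length w \<and> w ! p = l) = p0"
      using a p0 wp0 lenw by (intro Least_equality) (auto simp: not_less[symmetric])
    then show "e_pos (l - 1) w = Some p0" using a lin by (simp add: e_pos_def)
  qed
  have Cpart: "(opC m k Q \<noteq> None \<longleftrightarrow> (\<exists>p. e_pos (l - 1) w = Some p \<and> cc ! p = x))
       \<and> (\<forall>Q'. opC m k Q = Some Q' \<longrightarrow> e_tab \<sigma> (l - 1) T = Some (pi_sigma \<sigma> Q'))"
  proof
    show "opC m k Q \<noteq> None \<longleftrightarrow> (\<exists>p. e_pos (l - 1) w = Some p \<and> cc ! p = x)"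
      using C1 C2 C3 C4 by blast
    show "\<forall>Q'. opC m k Q = Some Q' \<longrightarrow> e_tab \<sigma> (l - 1) T = Some (pi_sigma \<sigma> Q')"
    proof (intro allI impI)
      fix Q' assume o: "opC m k Q = Some Q'"
      then have cC: condC using C1 by auto
      have Q': "Q' = diag_sub m k Q" using o by (simp add: opC_def split: if_splits)
      have "e_pos (l - 1) w = Some p0" using EP C3[OF cC] by simp
      then have "e_tab \<sigma> (l - 1) T = Some (tab_of_reading \<sigma> (w[p0 := l - 1]))"
        using C3[OF cC] by (simp add: e_tab_def e_word_def w_def)
      also have "tab_of_reading \<sigma> (w[p0 := l - 1]) = pi_sigma \<sigma> Q'"
        by (rule TAB) (use offdiag Qx xcell assms(7) in \<open>auto simp: Q' diag_sub_def\<close>)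
      finally show "e_tab \<sigma> (l - 1) T = Some (pi_sigma \<sigma> Q')" .
    qed
  qed
  
  define condD where "condD = (k = m \<or> (1 \<le> k \<and> k < m \<and> q k < q (k + 1)))"
  define PP where "PP = (\<lambda>p. p < length w \<and> w ! p = l)"
  have D1: "opD m k Q \<noteq> None \<longleftrightarrow> condD"
    by (simp add: opD_def condD_def q_def)
  have FP: "1 \<le> l \<and> \<not> has_inversion l w \<and> (\<forall>p. p0 < p \<and> p < m \<longrightarrow> w ! p \<noteq> l) \<Longrightarrow> f_pos l w = Some p0"
  proof -
    assume a: "1 \<le> l \<and> \<not> has_inversion l w \<and> (\<forall>p. p0 < p \<and> p < m \<longrightarrow> w ! p \<noteq> l)"
    have lin: "l \<in> set w" using p0 wp0 lenw by (metis nth_mem)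
    have "(GREATEST p. p < length w \<and> w ! p = l) = p0"
      using a p0 wp0 lenw by (intro Greatest_equality) (auto simp: not_less[symmetric])
    then show "f_pos l w = Some p0" using a lin by (simp add: f_pos_def)
  qed
  have D2: "(\<exists>p. f_pos l w = Some p \<and> cc ! p = x) \<longleftrightarrow>
      (1 \<le> l \<and> \<not> has_inversion l w \<and> (\<forall>p. p0 < p \<and> p < m \<longrightarrow> w ! p \<noteq> l))"
  proof
    assume "\<exists>p. f_pos l w = Some p \<and> cc ! p = x"
    then obtain p where p: "f_pos l w = Some p" "cc ! p = x" by blast
    have l1: "1 \<le> l" and ni: "\<not> has_inversion l w" and pl: "p = Greatest PP"
      using p(1) by (auto simp: f_pos_def PP_def split: if_splits)
    have P0: "PP p0" using p0 wp0 lenw by (simp add: PP_def)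
    have bnd: "\<And>y. PP y \<Longrightarrow> y \<le> m" using lenw by (simp add: PP_def)
    have "PP p" unfolding pl by (rule GreatestI_nat[of PP, OF P0 bnd])
    then have "p < m" using lenw by (simp add: PP_def)
    then have "p = p0" using p(2) p0 dcc lencc nth_eq_iff_index_eq[OF dcc, of p p0] by simp
    have "\<forall>p'. p0 < p' \<and> p' < m \<longrightarrow> w ! p' \<noteq> l"
    proof (intro allI impI notI)
      fix p' assume "p0 < p' \<and> p' < m" "w ! p' = l"
      then have "PP p'" using lenw by (simp add: PP_def)
      then have "p' \<le> p" unfolding pl by (rule Greatest_le_nat[of PP, OF _ bnd])
      then show False using \<open>p = p0\<close> \<open>p0 < p' \<and> p' < m\<close> by simp
    qed
    then show "1 \<le> l \<and> \<not> has_inversion l w \<and> (\<forall>p. p0 < p \<and> p < m \<longrightarrow> w ! p \<noteq> l)" using l1 ni by simp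
  next
    assume a: "1 \<le> l \<and> \<not> has_inversion l w \<and> (\<forall>p. p0 < p \<and> p < m \<longrightarrow> w ! p \<noteq> l)"
    show "\<exists>p. f_pos l w = Some p \<and> cc ! p = x" using FP[OF a] p0 by blast
  qed
  have D3: "condD \<Longrightarrow> 1 \<le> l \<and> \<not> has_inversion l w \<and> (\<forall>p. p0 < p \<and> p < m \<longrightarrow> w ! p \<noteq> l)"
  proof -
    assume cD: condD
    have VSx: "l + 1 = q k + r" using VS[OF xL] sx lx by simp
    have H: "l + 1 + (fst u - r) \<le> T u" if uL: "u \<in> set L" and su: "k + 1 < s u" for u
    proof -
      have "s u \<le> m + 1" using Lcell[OF uL] by simp
      then have km: "k < m" using su by simp
      then have qk: "q k < q (k + 1)" using cD by (simp add: condD_def)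
      obtain z where zL: "z \<in> set L" and sz: "s z = k + 2" using Lex[of "k + 2"] km by auto
      have VSz: "T z + 1 = q (k + 1) + fst z" using VS[OF zL] sz by simp
      have "s x \<le> s z" using sx sz by simp
      note h1 = VM[OF xL zL this]
      have "s z \<le> s u" using sz su by simp
      note h2 = VM[OF zL uL this]
      show ?thesis using h1 h2 VSz VSx qk sx by linarith
    qed
    have l1: "1 \<le> l" using Tpos[OF xL] lx by simp
    have ni: "\<not> has_inversion l w"
    proof
      assume "has_inversion l w"
      then obtain p p' where pp: "p < p'" "p' < m" "w ! p = l + 1" "w ! p' = l"
        using lenw by (auto simp: has_inversion_def)
      define u where "u = cc ! p"
      define v where "v = cc ! p'"
      have uL: "u \<in> set L" and vL: "v \<in> set L" using wp pp by (auto simp: u_def v_def)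
      have Tu: "T u = l + 1" and Tv': "T v = l" using wp pp by (auto simp: u_def v_def)
      have I: "snd u = snd v" "fst u = fst v + 1" "s v + 1 = s u"
        using INV[OF pp(1,2)] Tu Tv' by (auto simp: u_def v_def)
      show False
      proof (cases "s v = k + 1")
        case True
        then have "v = x" using Linj[OF vL xL] sx by simp
        moreover have "k + 1 < s u" using True I by simp
        note H[OF uL this]
        ultimately show False using I Tu sx by simp
      next
        case False
        show False
        proof (cases "s v < k + 1")
          case True
          then have "s u \<le> s x" using I sx by simp
          then show False using VM[OF uL xL] lx Tu by linarith
        next
          case False
          then have "k + 1 < s v" using \<open>s v \<noteq> k + 1\<close> by simp
          then show False using H[OF vL] Tv' by simp
        qed
      qed
    qed
    have nl: "\<forall>p. p0 < p \<and> p < m \<longrightarrow> w ! p \<noteq> l"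
    proof (intro allI impI notI)
      fix p assume pa: "p0 < p \<and> p < m" "w ! p = l"
      define u where "u = cc ! p"
      have pm: "p < m" using pa by simp
      have uL: "u \<in> set L" and Tu: "T u = l" using wp[OF pm] pa by (auto simp: u_def)
      show False
      proof (cases "k + 1 < s u")
        case True then show False using H[OF uL True] Tu by simp
      next
        case False
        then have sux: "s u \<le> s x" using sx by simp
        show False
        proof (cases "s u = s x")
          case True
          then have "u = x" using Linj[OF uL xL] by simp
          then have "p = p0" using nth_eq_iff_index_eq[OF dcc, of p p0] pm p0 lencc by (simp add: u_def)
          then show False using pa by simp
        next
          case False
          have h: "T u + (fst x - fst u) \<le> T x" "fst u \<le> fst x" "snd u \<le> snd x" using VM[OF uL xL sux] by blast+
          then have "fst u = fst x" using lx Tu by simp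
          then have "snd u < snd x" using False sux by (simp add: s_def)
          then have "Rc (cc ! p) (cc ! p0)" using p0 by (simp add: Rc_def u_def)
          then have "p < p0" using ord[OF pm p0(1)] by simp
          then show False using pa by simp
        qed
      qed
    qed
    show ?thesis using l1 ni nl by simp
  qed
  have D4: "1 \<le> l \<and> \<not> has_inversion l w \<and> (\<forall>p. p0 < p \<and> p < m \<longrightarrow> w ! p \<noteq> l) \<Longrightarrow> condD"
  proof -
    assume a: "1 \<le> l \<and> \<not> has_inversion l w \<and> (\<forall>p. p0 < p \<and> p < m \<longrightarrow> w ! p \<noteq> l)"
    have VSx: "l + 1 = q k + r" using VS[OF xL] sx lx by simp
    show condD
    proof (cases "k = m")
      case True
      then show ?thesis by (simp add: condD_def)
    next
      case False
      then have km: "k < m" using assms(4) by simp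
      obtain z where zL: "z \<in> set L" and sz: "s z = k + 2" using Lex[of "k + 2"] km by auto
      have VSz: "T z + 1 = q (k + 1) + fst z" using VS[OF zL] sz by simp
      have sxz: "s x \<le> s z" using sz sx by simp
      have xz: "fst x \<le> fst z" "snd x \<le> snd z" using VM[OF xL zL sxz] by blast+
      obtain pz where pz: "pz < m" "cc ! pz = z" using zL setcc lencc by (metis in_set_conv_nth)
      have wpz: "w ! pz = T z" using wp[OF pz(1)] pz by simp
      show ?thesis
      proof (rule ccontr)
        assume "\<not> condD"
        then have "\<not> q k < q (k + 1)" using km assms(3) by (simp add: condD_def)
        moreover have "q k \<le> q (k + 1)" using km assms(3) by (intro qmono) auto
        ultimately have qe: "q k = q (k + 1)" by simp
        show False
        proof (cases "fst z = fst x")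
          case True
          then have "snd x < snd z" using sz sx by (simp add: s_def)
          then have "Rc (cc ! p0) (cc ! pz)" using pz p0 by (simp add: Rc_def)
          then have "p0 < pz" using ord[OF p0(1) pz(1)] by simp
          moreover have "T z = l" using VSz VSx qe True sx by simp
          ultimately show False using a wpz pz by simp
        next
          case False
          then have "fst x < fst z" using xz by simp
          then have zs: "snd z = snd x" "fst x + 1 = fst z" using sz sx xz by (simp_all add: s_def)
          then have "Rc (cc ! pz) (cc ! p0)" using pz p0 by (simp add: Rc_def)
          then have "pz < p0" using ord[OF pz(1) p0(1)] by simp
          moreover have "T z = l + 1" using VSz VSx qe zs sx by simp
          ultimately have "has_inversion l w" using a wpz wp0 p0 lenw
            unfolding has_inversion_def by (intro exI[of _ pz] exI[of _ p0]) simp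
          then show False using a by simp
        qed
      qed
    qed
  qed
  have Dpart: "(opD m k Q \<noteq> None \<longleftrightarrow> (\<exists>p. f_pos l w = Some p \<and> cc ! p = x))
       \<and> (\<forall>Q'. opD m k Q = Some Q' \<longrightarrow> f_tab \<sigma> l T = Some (pi_sigma \<sigma> Q'))"
  proof
    show "opD m k Q \<noteq> None \<longleftrightarrow> (\<exists>p. f_pos l w = Some p \<and> cc ! p = x)"
      using D1 D2 D3 D4 by blast
    show "\<forall>Q'. opD m k Q = Some Q' \<longrightarrow> f_tab \<sigma> l T = Some (pi_sigma \<sigma> Q')"
    proof (intro allI impI)
      fix Q' assume o: "opD m k Q = Some Q'"
      then have cD: condD using D1 by auto
      have Q': "Q' = diag_add m k Q" using o by (simp add: opD_def split: if_splits)
      have "f_pos l w = Some p0" using FP D3[OF cD] by simp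
      then have "f_tab \<sigma> l T = Some (tab_of_reading \<sigma> (w[p0 := l + 1]))"
        by (simp add: f_tab_def f_word_def w_def)
      also have "tab_of_reading \<sigma> (w[p0 := l + 1]) = pi_sigma \<sigma> Q'"
        by (rule TAB) (use offdiag Qx xcell assms(7) in \<open>auto simp: Q' diag_add_def\<close>)
      finally show "f_tab \<sigma> l T = Some (pi_sigma \<sigma> Q')" .
    qed
  qed
  show ?thesis using Cpart Dpart by (simp add: w_def cc_def x_def)
qed


end
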